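(* Let $Q_5$ be the edge graph of the $5$-dimensional hypercube (vertices $\{0,1\}^5$, two vertices adjacent iff they differ in exactly one coordinate). Up to a permutation of the colours (simultaneous permutation of rows and columns of the colour adjacency matrix), the colour adjacency matrices of perfect $2$-colourings of $Q_5$ are exactly the six matrices \[ \begin{pmatrix} 0 & 5 \\ 5 & 0 \end{pmatrix}, \begin{pmatrix} 1 & 4 \\ 4 & 1 \end{pmatrix}, \begin{pmatrix} 2 & 3 \\ 1 & 4 \end{pmatrix}, \begin{pmatrix} 2 & 3 \\ 3 & 2 \end{pmatrix}, \begin{pmatrix} 3 & 2 \\ 2 & 3 \end{pmatrix}, \begin{pmatrix} 4 & 1 \\ 1 & 4 \end{pmatrix}, \] and the colour adjacency matrices of perfect $3$-colourings of $Q_5$ are exactly the eight matrices \[ \begin{pmatrix} 0 & 1 & 4 \\ 1 & 0 & 4 \\ 2 & 2 & 1 \end{pmatrix}, \begin{pmatrix} 0 & 3 & 2 \\ 3 & 0 & 2 \\ 1 & 1 & 3 \end{pmatrix}, \begin{pmatrix} 0 & 5 & 0 \\ 1 & 0 & 4 \\ 0 & 2 & 3 \end{pmatrix}, \begin{pmatrix} 1 & 0 & 4 \\ 0 & 1 & 4 \\ 1 & 3 & 1 \end{pmatrix}, \begin{pmatrix} 1 & 0 & 4 \\ 0 & 1 & 4 \\ 2 & 2 & 1 \end{pmatrix}, \begin{pmatrix} 1 & 2 & 2 \\ 2 & 1 & 2 \\ 1 & 1 & 3 \end{pmatrix}, \begin{pmatrix} 2 & 1 & 2 \\ 1 & 2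 & 2 \\ 1 & 1 & 3 \end{pmatrix}, \begin{pmatrix} 3 & 0 & 2 \\ 0 & 3 & 2 \\ 1 & 1 & 3 \end{pmatrix}. \] In particular each of these matrices is realized by some perfect colouring of $Q_5$.
   Context: An $m$-colouring of a graph $G=(V,E)$ is a partition of $V$ into $m$ disjoint nonempty sets $V_1,\dots,V_m$ (the colours; adjacent vertices may have the same colour). It is perfect if for all $i,j$ every vertex of colour $i$ has the same number $a_{ij}$ of neighbours of colour $j$; the matrix $A=(a_{ij})$ is its colour adjacency matrix. Relabelling colours by a permutation $\sigma$ replaces $A$ by $(a_{\sigma(i)\sigma(j)})$. *)

theory Defs
  imports Main "HOL-Combinatorics.Permutations"
begin

definition Q5V :: "bool list set" where
  "Q5V = {xs. length xs = 5}"

definition Q5adj :: "bool list \<Rightarrow> bool list \<Rightarrow> bool" where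
  "Q5adj xs ys \<longleftrightarrow> card {i. i < 5 \<and> xs ! i \<noteq> ys ! i} = 1"

definition colouring :: "nat \<Rightarrow> (bool list \<Rightarrow> nat) \<Rightarrow> bool" where
  "colouring m c \<longleftrightarrow> c ` Q5V = {..<m}"

definition perfect_with_matrix :: "nat \<Rightarrow> (bool list \<Rightarrow> nat) \<Rightarrow> (nat \<Rightarrow> nat \<Rightarrow> nat) \<Rightarrow> bool" where
  "perfect_with_matrix m c A \<longleftrightarrow> colouring m c \<and>
     (\<forall>i<m. \<forall>j<m. \<forall>v\<in>Q5V. c v = i \<longrightarrow> card {w\<in>Q5V. Q5adj v w \<and> c w = j} = A i j)"

definition mat :: "nat list list \<Rightarrow> nat \<Rightarrow> nat \<Rightarrow> nat" where
  "mat B i j = B ! i ! j"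

definition classified_by :: "nat \<Rightarrow> nat list list list \<Rightarrow> bool" where
  "classified_by m L \<longleftrightarrow>
     (\<forall>c A. perfect_with_matrix m c A \<longrightarrow>
        (\<exists>\<sigma>. \<sigma> permutes {..<m} \<and> (\<exists>B\<in>set L. \<forall>i<m. \<forall>j<m. A (\<sigma> i) (\<sigma> j) = mat B i j))) \<and>
     (\<forall>B\<in>set L. \<exists>c. perfect_with_matrix m c (mat B))"

end

theory Submission
  imports Defs
begin

definition flip :: "nat \<Rightarrow> bool list \<Rightarrow> bool list" where
  "flip i v = v[i := \<not> v!i]"

definition dset :: "bool list \<Rightarrow> bool list \<Rightarrow> nat set" where
  "dset v u = {i. i < 5 \<and> v!i \<noteq> u!i}"

definition hdist :: "bool list \<Rightarrow> bool list \<Rightarrow> nat" where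
  "hdist v u = card (dset v u)"

lemma Q5V_list: "Q5V = set (List.n_lists 5 [False, True])"
  unfolding Q5V_def set_n_lists by auto

lemma finite_Q5V: "finite Q5V"
  unfolding Q5V_list by simp

lemma flip_V: "v \<in> Q5V \<Longrightarrow> flip i v \<in> Q5V"
  unfolding Q5V_def flip_def by simp

lemma flip_nth: "i < 5 \<Longrightarrow> v \<in> Q5V \<Longrightarrow> flip i v ! j = (if j = i then \<not> v!i else v!j)"
  unfolding Q5V_def flip_def by (simp add: nth_list_update)

lemma flip_flip: "flip i (flip i v) = v"
  unfolding flip_def by (cases "i < length v") (auto simp: list_update_beyond)

lemma flip_comm: "flip i (flip j v) = flip j (flip i v)"
  unfolding flip_def
  by (cases "i = j") (auto simp: nth_list_update list_update_swap)

lemma adj_iff: assumes "v \<in> Q5V" "w \<in> Q5V"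
  shows "Q5adj v w \<longleftrightarrow> (\<exists>i<5. w = flip i v)"
proof
  assume "Q5adj v w"
  then have "card {i. i < 5 \<and> v ! i \<noteq> w ! i} = 1" unfolding Q5adj_def .
  then obtain i where i: "{i. i < 5 \<and> v ! i \<noteq> w ! i} = {i}" by (meson card_1_singletonE)
  then have i5: "i < 5" by auto
  have "w = flip i v"
  proof (rule nth_equalityI)
    show "length w = length (flip i v)" using assms unfolding Q5V_def flip_def by simp
    fix j assume "j < length w"
    then have j5: "j < 5" using assms unfolding Q5V_def by simp
    show "w ! j = flip i v ! j"
    proof (cases "j = i")
      case True
      then have "v!j \<noteq> w!j" using i by auto
      then show ?thesis using True flip_nth[OF i5 assms(1)] by auto
    next
      case False
      then have "v!j = w!j" using i j5 by auto
      then show ?thesis using False flip_nth[OF i5 assms(1)] by auto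
    qed
  qed
  then show "\<exists>i<5. w = flip i v" using i5 by blast
next
  assume "\<exists>i<5. w = flip i v"
  then obtain i where i5: "i < 5" and w: "w = flip i v" by blast
  have "{j. j < 5 \<and> v ! j \<noteq> w ! j} = {i}"
    using i5 flip_nth[OF i5 assms(1)] w by auto
  then show "Q5adj v w" unfolding Q5adj_def by simp
qed

lemma flip_inj: "v \<in> Q5V \<Longrightarrow> inj_on (\<lambda>i. flip i v) {..<5}"
  unfolding inj_on_def
proof (intro ballI impI)
  fix i j assume v: "v \<in> Q5V" and i: "i \<in> {..<5::nat}" and j: "j \<in> {..<5::nat}" and e: "flip i v = flip j v"
  have "flip i v ! i = flip j v ! i" using e by simp
  moreover have "flip i v ! i = (\<not> v!i)" using flip_nth[of i v i] i v by simp
  moreover have "i \<noteq> j \<Longrightarrow> flip j v ! i = v!i" using flip_nth[of j v i] j v by simp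
  ultimately show "i = j" by (cases "i = j") auto
qed

lemma nbr_card: assumes "v \<in> Q5V"
  shows "card {w\<in>Q5V. Q5adj v w \<and> P w} = card {i. i < 5 \<and> P (flip i v)}"
proof -
  have "{w\<in>Q5V. Q5adj v w \<and> P w} = (\<lambda>i. flip i v) ` {i. i < 5 \<and> P (flip i v)}"
    using adj_iff[OF assms] flip_V[OF assms] by auto
  moreover have "inj_on (\<lambda>i. flip i v) {i. i < 5 \<and> P (flip i v)}"
    by (rule inj_on_subset[OF flip_inj[OF assms]]) auto
  ultimately show ?thesis by (simp add: card_image)
qed

lemma adj_sym: "Q5adj v w = Q5adj w v"
proof -
  have "{i. i < 5 \<and> v ! i \<noteq> w ! i} = {i. i < 5 \<and> w ! i \<noteq> v ! i}" by auto
  then show ?thesis unfolding Q5adj_def by simp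
qed

lemma finite_dset: "finite (dset v u)"
  unfolding dset_def by simp

lemma dset_flip: assumes "u \<in> Q5V" "i < 5"
  shows "dset v (flip i u) = (if v!i = u!i then insert i (dset v u) else dset v u - {i})"
  using flip_nth[OF assms(2,1)] assms(2) unfolding dset_def by auto

lemma hd_flip: assumes "u \<in> Q5V" "i < 5"
  shows "hdist v (flip i u) = (if v!i = u!i then Suc (hdist v u) else hdist v u - 1)"
proof (cases "v!i = u!i")
  case True
  then have "i \<notin> dset v u" unfolding dset_def by auto
  then show ?thesis using True dset_flip[OF assms, of v] finite_dset unfolding hdist_def by simp
next
  case False
  then have "i \<in> dset v u" using assms(2) unfolding dset_def by auto
  then show ?thesis using False dset_flip[OF assms, of v] finite_dset unfolding hdist_def by simp
qed

lemma hd_le: "hdist v u \<le> 5"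
proof -
  have "dset v u \<subseteq> {..<5}" unfolding dset_def by auto
  then show ?thesis unfolding hdist_def by (metis card_lessThan card_mono finite_lessThan)
qed

lemma hd_zero: assumes "v \<in> Q5V" "u \<in> Q5V" shows "hdist v u = 0 \<longleftrightarrow> u = v"
proof
  assume "hdist v u = 0"
  then have "dset v u = {}" unfolding hdist_def using finite_dset by simp
  then show "u = v" using assms unfolding dset_def Q5V_def by (auto intro: nth_equalityI)
qed (simp add: hdist_def dset_def)

lemma card_same: "card {i. i < 5 \<and> v!i = u!i} = 5 - hdist v u"
proof -
  have "{..<5} = {i. i < 5 \<and> v!i = u!i} \<union> dset v u" unfolding dset_def by auto
  moreover have "{i. i < 5 \<and> v!i = u!i} \<inter> dset v u = {}" unfolding dset_def by auto
  ultimately have "5 = card {i. i < 5 \<and> v!i = u!i} + hdist v u" unfolding hdist_def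
    by (metis card_Un_disjoint card_lessThan finite_dset finite_Un finite_lessThan)
  then show ?thesis by simp
qed

lemma sphere_nb: assumes "u \<in> Q5V"
  shows "card {i. i < 5 \<and> hdist v (flip i u) = k} =
    (if Suc (hdist v u) = k then 5 - hdist v u else 0) + (if hdist v u = Suc k then Suc k else 0)"
proof -
  let ?d = "hdist v u"
  have e: "{i. i < 5 \<and> hdist v (flip i u) = k} =
     {i. i < 5 \<and> v!i = u!i \<and> Suc ?d = k} \<union> {i. i \<in> dset v u \<and> ?d = Suc k}"
  proof -
    have ge: "i \<in> dset v u \<Longrightarrow> ?d \<ge> 1" for i unfolding hdist_def
      using finite_dset card_0_eq[of "dset v u"] by fastforce
    have pt: "i < 5 \<Longrightarrow> (hdist v (flip i u) = k) \<longleftrightarrow> (v!i = u!i \<and> Suc ?d = k) \<or> (i \<in> dset v u \<and> ?d = Suc k)" for i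
    proof -
      assume i: "i < 5"
      show ?thesis
      proof (cases "v!i = u!i")
        case True
        then show ?thesis using hd_flip[OF assms i, of v] by (simp add: dset_def)
      next
        case False
        then have "i \<in> dset v u" using i by (simp add: dset_def)
        then show ?thesis using False ge[of i] hd_flip[OF assms i, of v] by auto
      qed
    qed
    show ?thesis
    proof (rule set_eqI)
      fix i
      show "i \<in> {i. i < 5 \<and> hdist v (flip i u) = k} \<longleftrightarrow>
        i \<in> {i. i < 5 \<and> v!i = u!i \<and> Suc ?d = k} \<union> {i. i \<in> dset v u \<and> ?d = Suc k}"
        using pt[of i] by (auto simp: dset_def)
    qed
  qed
  have c1: "card {i. i < 5 \<and> v!i = u!i \<and> Suc ?d = k} = (if Suc ?d = k then 5 - ?d else 0)"
    using card_same[of v u] by auto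
  have c2: "card {i. i \<in> dset v u \<and> ?d = Suc k} = (if ?d = Suc k then Suc k else 0)"
    unfolding hdist_def by auto
  have "card ({i. i < 5 \<and> v!i = u!i \<and> Suc ?d = k} \<union> {i. i \<in> dset v u \<and> ?d = Suc k}) =
        card {i. i < 5 \<and> v!i = u!i \<and> Suc ?d = k} + card {i. i \<in> dset v u \<and> ?d = Suc k}"
    by (rule card_Un_disjoint) (auto simp: dset_def finite_dset)
  then show ?thesis using e c1 c2 by simp
qed

definition ind :: "bool \<Rightarrow> nat" where "ind b = (if b then 1 else 0)"

lemma ind_mult: "ind P * ind Q = ind (P \<and> Q)" by (simp add: ind_def)

lemma card_ind: assumes "finite S" shows "card {x\<in>S. P x} = (\<Sum>x\<in>S. ind (P x))"
proof -
  have "card {x\<in>S. P x} = sum (\<lambda>x. 1) {x\<in>S. P x}" by (rule card_eq_sum)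
  also have "\<dots> = (\<Sum>x\<in>S. if P x then 1 else 0)" by (rule sum.inter_filter[OF assms])
  also have "\<dots> = (\<Sum>x\<in>S. ind (P x))" by (simp add: ind_def)
  finally show ?thesis .
qed

lemma card_indV: "card {x\<in>Q5V. P x} = (\<Sum>x\<in>Q5V. ind (P x))"
  by (rule card_ind[OF finite_Q5V])

lemma perfect_range: "perfect_with_matrix m c A \<Longrightarrow> u \<in> Q5V \<Longrightarrow> c u < m"
  unfolding perfect_with_matrix_def colouring_def by auto

lemma perfect_surj: "perfect_with_matrix m c A \<Longrightarrow> i < m \<Longrightarrow> \<exists>v\<in>Q5V. c v = i"
  unfolding perfect_with_matrix_def colouring_def by (metis imageE lessThan_iff)

lemma A_sum: assumes "perfect_with_matrix m c A" "u \<in> Q5V" "j < m"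
  shows "A (c u) j = (\<Sum>w\<in>Q5V. ind (Q5adj u w \<and> c w = j))"
proof -
  have "\<forall>i<m. \<forall>j<m. \<forall>v\<in>Q5V. c v = i \<longrightarrow> card {w\<in>Q5V. Q5adj v w \<and> c w = j} = A i j"
    using assms(1) unfolding perfect_with_matrix_def by blast
  then have "A (c u) j = card {w\<in>Q5V. Q5adj u w \<and> c w = j}"
    using assms(2,3) perfect_range[OF assms(1,2)] by simp
  then show ?thesis by (simp only: card_indV)
qed

definition Xs :: "(bool list \<Rightarrow> nat) \<Rightarrow> bool list \<Rightarrow> nat \<Rightarrow> nat \<Rightarrow> nat" where
  "Xs c v k j = card {w\<in>Q5V. hdist v w = k \<and> c w = j}"

lemma Xs_sum: "Xs c v k j = (\<Sum>w\<in>Q5V. ind (hdist v w = k \<and> c w = j))"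
  unfolding Xs_def by (rule card_indV)

lemma main_eq: assumes P: "perfect_with_matrix m c A" and v: "v \<in> Q5V" and j: "j < m"
  shows "(\<Sum>l<m. Xs c v k l * A l j) =
     Suc k * Xs c v (Suc k) j + (if k = 0 then 0 else (6 - k) * Xs c v (k - 1) j)"
proof -
  have s1: "(\<Sum>l<m. Xs c v k l * A l j) = (\<Sum>u\<in>Q5V. ind (hdist v u = k) * A (c u) j)"
  proof -
    have "(\<Sum>l<m. Xs c v k l * A l j) = (\<Sum>l<m. \<Sum>u\<in>Q5V. ind (hdist v u = k \<and> c u = l) * A l j)"
      by (simp add: Xs_sum sum_distrib_right)
    also have "\<dots> = (\<Sum>u\<in>Q5V. \<Sum>l<m. ind (hdist v u = k \<and> c u = l) * A l j)"
      by (rule sum.swap)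
    also have "\<dots> = (\<Sum>u\<in>Q5V. ind (hdist v u = k) * A (c u) j)"
    proof (rule sum.cong[OF refl])
      fix u assume u: "u \<in> Q5V"
      have "(\<Sum>l<m. ind (hdist v u = k \<and> c u = l) * A l j) =
            (\<Sum>l<m. if c u = l then ind (hdist v u = k) * A (c u) j else 0)"
        by (rule sum.cong) (auto simp: ind_def)
      also have "\<dots> = ind (hdist v u = k) * A (c u) j"
        using perfect_range[OF P u] by (simp add: sum.delta)
      finally show "(\<Sum>l<m. ind (hdist v u = k \<and> c u = l) * A l j) = ind (hdist v u = k) * A (c u) j" .
    qed
    finally show ?thesis .
  qed
  also have "\<dots> = (\<Sum>u\<in>Q5V. \<Sum>w\<in>Q5V. ind (hdist v u = k) * ind (Q5adj u w \<and> c w = j))"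
    by (rule sum.cong[OF refl]) (simp add: A_sum[OF P _ j] sum_distrib_left)
  also have "\<dots> = (\<Sum>w\<in>Q5V. \<Sum>u\<in>Q5V. ind (hdist v u = k) * ind (Q5adj u w \<and> c w = j))"
    by (rule sum.swap)
  also have "\<dots> = (\<Sum>w\<in>Q5V. ind (c w = j) * (\<Sum>u\<in>Q5V. ind (Q5adj w u \<and> hdist v u = k)))"
    by (rule sum.cong[OF refl]) (auto simp: sum_distrib_left ind_def adj_sym intro!: sum.cong)
  also have "\<dots> = (\<Sum>w\<in>Q5V. ind (c w = j) * card {i. i < 5 \<and> hdist v (flip i w) = k})"
  proof (rule sum.cong[OF refl])
    fix w assume w: "w \<in> Q5V"
    have "(\<Sum>u\<in>Q5V. ind (Q5adj w u \<and> hdist v u = k)) = card {u\<in>Q5V. Q5adj w u \<and> hdist v u = k}"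
      by (simp only: card_indV)
    also have "\<dots> = card {i. i < 5 \<and> hdist v (flip i w) = k}" by (rule nbr_card[OF w])
    finally show "ind (c w = j) * (\<Sum>u\<in>Q5V. ind (Q5adj w u \<and> hdist v u = k)) =
        ind (c w = j) * card {i. i < 5 \<and> hdist v (flip i w) = k}" by simp
  qed
  also have "\<dots> = (\<Sum>w\<in>Q5V. Suc k * ind (hdist v w = Suc k \<and> c w = j) +
        (if k = 0 then 0 else (6 - k) * ind (hdist v w = k - 1 \<and> c w = j)))"
  proof (rule sum.cong[OF refl])
    fix w assume w: "w \<in> Q5V"
    show "ind (c w = j) * card {i. i < 5 \<and> hdist v (flip i w) = k} =
        Suc k * ind (hdist v w = Suc k \<and> c w = j) +
        (if k = 0 then 0 else (6 - k) * ind (hdist v w = k - 1 \<and> c w = j))"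
      unfolding sphere_nb[OF w] by (auto simp: ind_def)
  qed
  also have "\<dots> = Suc k * Xs c v (Suc k) j + (if k = 0 then 0 else (6 - k) * Xs c v (k - 1) j)"
    by (simp add: sum.distrib Xs_sum sum_distrib_left)
  finally show ?thesis .
qed

lemma Xs_zero: assumes "v \<in> Q5V" shows "Xs c v 0 j = (if c v = j then 1 else 0)"
proof -
  have "{w\<in>Q5V. hdist v w = 0 \<and> c w = j} = (if c v = j then {v} else {})"
    using hd_zero[OF assms] assms by auto
  then show ?thesis unfolding Xs_def by simp
qed

lemma Xs_big: "k > 5 \<Longrightarrow> Xs c v k j = 0"
  unfolding Xs_def using hd_le[of v] by (metis (mono_tags, lifting) card.empty empty_Collect_eq leD)

lemma Xs_total: "(\<Sum>k<6. Xs c v k j) = card {w\<in>Q5V. c w = j}"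
proof -
  have "(\<Sum>k<6. Xs c v k j) = (\<Sum>w\<in>Q5V. \<Sum>k<6. ind (hdist v w = k \<and> c w = j))"
    unfolding Xs_sum by (rule sum.swap)
  also have "\<dots> = (\<Sum>w\<in>Q5V. ind (c w = j))"
  proof (rule sum.cong[OF refl])
    fix w
    have "(\<Sum>k<6. ind (hdist v w = k \<and> c w = j)) = (\<Sum>k<6. if hdist v w = k then ind (c w = j) else 0)"
      by (rule sum.cong) (auto simp: ind_def)
    also have "\<dots> = ind (c w = j)" using hd_le[of v w] by (simp add: sum.delta')
    finally show "(\<Sum>k<6. ind (hdist v w = k \<and> c w = j)) = ind (c w = j)" .
  qed
  finally show ?thesis by (simp only: card_indV)
qed

lemma double_count: assumes P: "perfect_with_matrix m c A" and i: "i < m" and j: "j < m"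
  shows "card {w\<in>Q5V. c w = i} * A i j = card {w\<in>Q5V. c w = j} * A j i"
proof -
  have key: "card {w\<in>Q5V. c w = i} * A i j =
     (\<Sum>u\<in>Q5V. \<Sum>w\<in>Q5V. ind (c u = i \<and> Q5adj u w \<and> c w = j))" if i: "i < m" and j: "j < m" for i j
  proof -
    have "card {w\<in>Q5V. c w = i} * A i j = (\<Sum>u\<in>Q5V. ind (c u = i) * A i j)"
      by (simp only: card_indV sum_distrib_right)
    also have "\<dots> = (\<Sum>u\<in>Q5V. ind (c u = i) * A (c u) j)"
      by (rule sum.cong) (auto simp: ind_def)
    also have "\<dots> = (\<Sum>u\<in>Q5V. \<Sum>w\<in>Q5V. ind (c u = i \<and> Q5adj u w \<and> c w = j))"
      by (rule sum.cong[OF refl]) (simp add: A_sum[OF P _ j] sum_distrib_left ind_mult)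
    finally show ?thesis .
  qed
  have "(\<Sum>u\<in>Q5V. \<Sum>w\<in>Q5V. ind (c u = i \<and> Q5adj u w \<and> c w = j)) =
        (\<Sum>w\<in>Q5V. \<Sum>u\<in>Q5V. ind (c u = i \<and> Q5adj u w \<and> c w = j))" by (rule sum.swap)
  also have "\<dots> = (\<Sum>w\<in>Q5V. \<Sum>u\<in>Q5V. ind (c w = j \<and> Q5adj w u \<and> c u = i))"
    by (intro sum.cong refl) (auto simp: adj_sym ind_def)
  finally show ?thesis using key[OF i j] key[OF j i] by simp
qed

lemma row_sum: assumes P: "perfect_with_matrix m c A" and i: "i < m"
  shows "(\<Sum>j<m. A i j) = 5"
proof -
  obtain v where v: "v \<in> Q5V" "c v = i" using perfect_surj[OF P i] by blast
  have "(\<Sum>j<m. A i j) = (\<Sum>j<m. \<Sum>w\<in>Q5V. ind (Q5adj v w \<and> c w = j))"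
    using A_sum[OF P v(1)] v(2) by simp
  also have "\<dots> = (\<Sum>w\<in>Q5V. \<Sum>j<m. ind (Q5adj v w \<and> c w = j))" by (rule sum.swap)
  also have "\<dots> = (\<Sum>w\<in>Q5V. ind (Q5adj v w))"
  proof (rule sum.cong[OF refl])
    fix w assume w: "w \<in> Q5V"
    have "(\<Sum>j<m. ind (Q5adj v w \<and> c w = j)) = (\<Sum>j<m. if c w = j then ind (Q5adj v w) else 0)"
      by (rule sum.cong) (auto simp: ind_def)
    also have "\<dots> = ind (Q5adj v w)" using perfect_range[OF P w] by (simp add: sum.delta)
    finally show "(\<Sum>j<m. ind (Q5adj v w \<and> c w = j)) = ind (Q5adj v w)" .
  qed
  also have "\<dots> = card {w\<in>Q5V. Q5adj v w \<and> True}" by (simp only: card_indV simp_thms)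
  also have "\<dots> = 5" using nbr_card[OF v(1), of "\<lambda>_. True"] by simp
  finally show ?thesis .
qed

lemma class_nonempty: assumes P: "perfect_with_matrix m c A" and j: "j < m"
  shows "1 \<le> card {w\<in>Q5V. c w = j}"
proof -
  obtain v where "v \<in> Q5V" "c v = j" using perfect_surj[OF P j] by blast
  then have "{w\<in>Q5V. c w = j} \<noteq> {}" by auto
  then show ?thesis using finite_Q5V by (simp add: Suc_le_eq card_gt_0_iff)
qed

definition dotc :: "nat list list \<Rightarrow> nat list \<Rightarrow> nat \<Rightarrow> nat" where
  "dotc B x j = sum_list (map (\<lambda>l. x!l * B!l!j) [0..<length B])"

definition nxt :: "nat list list \<Rightarrow> nat \<Rightarrow> nat list \<Rightarrow> nat list \<Rightarrow> nat list" where
  "nxt B k p x = map (\<lambda>j. (dotc B x j - (6-k)*p!j) div (k+1)) [0..<length B]"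

definition eqs_ok :: "nat list list \<Rightarrow> nat list \<Rightarrow> nat list \<Rightarrow> nat list \<Rightarrow> nat \<Rightarrow> bool" where
  "eqs_ok B p x y k = list_all (\<lambda>j. dotc B x j = (k+1)*y!j + (6-k)*p!j) [0..<length B]"

fun run :: "nat list list \<Rightarrow> nat \<Rightarrow> nat \<Rightarrow> nat list \<Rightarrow> nat list \<Rightarrow> nat list \<Rightarrow> nat list option"
and run2 :: "nat list list \<Rightarrow> nat \<Rightarrow> nat \<Rightarrow> nat list \<Rightarrow> nat list \<Rightarrow> nat list \<Rightarrow> nat list \<Rightarrow> nat list option" where
  "run B 0 k p x t = (if eqs_ok B p x (replicate (length B) 0) k then Some (map2 (+) t x) else None)"
| "run B (Suc n) k p x t = run2 B n k p x t (nxt B k p x)"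
| "run2 B n k p x t y = (if eqs_ok B p x y k then run B n (Suc k) x y (map2 (+) t x) else None)"

fun tot_ok :: "nat list list \<Rightarrow> nat list option \<Rightarrow> bool" where
  "tot_ok B None = False"
| "tot_ok B (Some t) = (list_all (\<lambda>j. 1 \<le> t!j) [0..<length B] \<and>
    list_all (\<lambda>i. list_all (\<lambda>j. t!i * B!i!j = t!j * B!j!i) [0..<length B]) [0..<length B])"

definition start :: "nat list list \<Rightarrow> nat \<Rightarrow> nat list option" where
  "start B i = run B 5 0 (replicate (length B) 0) (map (\<lambda>j. if j = i then 1 else 0) [0..<length B]) (replicate (length B) 0)"

fun chkl :: "nat list list \<Rightarrow> nat list \<Rightarrow> bool" where
  "chkl B [] = True"
| "chkl B (i#is) = (if tot_ok B (start B i) then chkl B is else False)"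

definition chk :: "nat list list \<Rightarrow> bool" where
  "chk B = chkl B [0..<length B]"

definition Bm :: "nat \<Rightarrow> (nat \<Rightarrow> nat \<Rightarrow> nat) \<Rightarrow> nat list list" where
  "Bm m A = map (\<lambda>i. map (\<lambda>j. A i j) [0..<m]) [0..<m]"

lemma Bm_len[simp]: "length (Bm m A) = m" by (simp add: Bm_def)
lemma Bm_nth: "l < m \<Longrightarrow> j < m \<Longrightarrow> Bm m A ! l ! j = A l j" by (simp add: Bm_def)

lemma chkl_all: "(\<And>i. i \<in> set is \<Longrightarrow> tot_ok B (start B i)) \<Longrightarrow> chkl B is"
  by (induction "is") auto

lemma ivl56: "{5..<6::nat} = {5}" by auto

lemma sum_upt: "sum_list (map f [0..<m]) = (\<Sum>l<m. f l)"
  by (simp add: interv_sum_list_conv_sum_set_nat atLeast_upt)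

lemma dotc_Bm: "dotc (Bm m A) x j = (\<Sum>l<m. x!l * A l j)" if "j < m"
  unfolding dotc_def Bm_len sum_upt using that by (intro sum.cong) (auto simp: Bm_nth)

context
  fixes m c A v
  assumes P: "perfect_with_matrix m c A" and v: "v \<in> Q5V"
begin

definition xs :: "nat \<Rightarrow> nat list" where "xs k = map (\<lambda>j. Xs c v k j) [0..<m]"
definition prevx :: "nat \<Rightarrow> nat list" where "prevx k = (if k = 0 then replicate m 0 else xs (k - 1))"

lemma len_xs[simp]: "length (xs k) = m" by (simp add: xs_def)
lemma len_prevx[simp]: "length (prevx k) = m" by (simp add: prevx_def)

lemma dot_xs: "j < m \<Longrightarrow> dotc (Bm m A) (xs k) j =
   Suc k * Xs c v (Suc k) j + (6 - k) * (prevx k ! j)"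
  unfolding dotc_Bm
proof -
  assume j: "j < m"
  have "(\<Sum>l<m. xs k ! l * A l j) = (\<Sum>l<m. Xs c v k l * A l j)"
    by (intro sum.cong) (auto simp: xs_def)
  also have "\<dots> = Suc k * Xs c v (Suc k) j + (if k = 0 then 0 else (6 - k) * Xs c v (k - 1) j)"
    by (rule main_eq[OF P v j])
  also have "\<dots> = Suc k * Xs c v (Suc k) j + (6 - k) * (prevx k ! j)"
    using j by (simp add: prevx_def xs_def)
  finally show "(\<Sum>l<m. xs k ! l * A l j) = Suc k * Xs c v (Suc k) j + (6 - k) * (prevx k ! j)" .
qed

lemma eqs_main: "k < 5 \<Longrightarrow> eqs_ok (Bm m A) (prevx k) (xs k) (xs (Suc k)) k"
  unfolding eqs_ok_def list_all_iff using dot_xs by (auto simp: xs_def)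

lemma eqs_last: "eqs_ok (Bm m A) (prevx 5) (xs 5) (replicate m 0) 5"
  unfolding eqs_ok_def list_all_iff using dot_xs[of _ 5] Xs_big[of 6 c v] by auto

lemma nxt_main: assumes k: "k < 5" shows "nxt (Bm m A) k (prevx k) (xs k) = xs (Suc k)"
proof (rule nth_equalityI)
  show "length (nxt (Bm m A) k (prevx k) (xs k)) = length (xs (Suc k))" by (simp add: nxt_def)
  fix i assume "i < length (nxt (Bm m A) k (prevx k) (xs k))"
  then have i: "i < m" by (simp add: nxt_def)
  have d: "dotc (Bm m A) (xs k) i = Suc k * Xs c v (Suc k) i + (6 - k) * (prevx k ! i)"
    by (rule dot_xs[OF i])
  have "nxt (Bm m A) k (prevx k) (xs k) ! i = (dotc (Bm m A) (xs k) i - (6-k) * prevx k ! i) div (k+1)"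
    using i by (simp add: nxt_def)
  also have "\<dots> = Xs c v (Suc k) i" by (simp add: d del: mult_Suc)
  also have "\<dots> = xs (Suc k) ! i" using i by (simp add: xs_def)
  finally show "nxt (Bm m A) k (prevx k) (xs k) ! i = xs (Suc k) ! i" .
qed

lemma run_main: "n + k = 5 \<Longrightarrow> length t = m \<Longrightarrow>
   run (Bm m A) n k (prevx k) (xs k) t = Some (map (\<lambda>j. t!j + (\<Sum>q\<in>{k..<6}. Xs c v q j)) [0..<m])"
proof (induction n arbitrary: k t)
  case 0
  then have k: "k = 5" by simp
  have "map2 (+) t (xs 5) = map (\<lambda>j. t!j + (\<Sum>q\<in>{5..<6}. Xs c v q j)) [0..<m]"
    using 0 by (intro nth_equalityI) (auto simp: xs_def ivl56)
  then show ?case using eqs_last k by simp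
next
  case (Suc n)
  then have k: "k < 5" by simp
  have pk: "prevx (Suc k) = xs k" by (simp add: prevx_def)
  have lt: "length (map2 (+) t (xs k)) = m" using Suc by simp
  have "run (Bm m A) (Suc n) k (prevx k) (xs k) t =
        run (Bm m A) n (Suc k) (xs k) (xs (Suc k)) (map2 (+) t (xs k))"
    using nxt_main[OF k] eqs_main[OF k] by simp
  also have "\<dots> = Some (map (\<lambda>j. map2 (+) t (xs k) ! j + (\<Sum>q\<in>{Suc k..<6}. Xs c v q j)) [0..<m])"
    using Suc.IH[of "Suc k" "map2 (+) t (xs k)"] Suc.prems lt pk by simp
  also have "map (\<lambda>j. map2 (+) t (xs k) ! j + (\<Sum>q\<in>{Suc k..<6}. Xs c v q j)) [0..<m] =
             map (\<lambda>j. t!j + (\<Sum>q\<in>{k..<6}. Xs c v q j)) [0..<m]"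
    using Suc.prems k by (intro nth_equalityI) (auto simp: xs_def sum.atLeast_Suc_lessThan)
  finally show ?case .
qed

lemma start_main: "start (Bm m A) (c v) = Some (map (\<lambda>j. card {w\<in>Q5V. c w = j}) [0..<m])"
proof -
  have x0: "map (\<lambda>j. if j = c v then 1 else 0) [0..<m] = xs 0"
    unfolding xs_def using Xs_zero[OF v] by (intro nth_equalityI) auto
  have "start (Bm m A) (c v) = run (Bm m A) 5 0 (prevx 0) (xs 0) (replicate m 0)"
    unfolding start_def Bm_len x0 by (simp add: prevx_def)
  also have "\<dots> = Some (map (\<lambda>j. replicate m 0 ! j + (\<Sum>q\<in>{0..<6}. Xs c v q j)) [0..<m])"
    by (rule run_main) auto
  also have "map (\<lambda>j. replicate m 0 ! j + (\<Sum>q\<in>{0..<6}. Xs c v q j)) [0..<m] =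
       map (\<lambda>j. card {w\<in>Q5V. c w = j}) [0..<m]"
    by (intro nth_equalityI) (auto simp: atLeast0LessThan Xs_total)
  finally show ?thesis .
qed

end

theorem chk_sound: assumes P: "perfect_with_matrix m c A" shows "chk (Bm m A)"
  unfolding chk_def Bm_len
proof (rule chkl_all)
  fix i assume "i \<in> set [0..<m]"
  then have i: "i < m" by simp
  obtain v where v: "v \<in> Q5V" "c v = i" using perfect_surj[OF P i] by blast
  have s: "start (Bm m A) i = Some (map (\<lambda>j. card {w\<in>Q5V. c w = j}) [0..<m])"
    using start_main[OF P v(1)] v(2) by simp
  show "tot_ok (Bm m A) (start (Bm m A) i)"
    unfolding s using class_nonempty[OF P] double_count[OF P]
    by (auto simp: list_all_iff Bm_nth)
qed

section \<open>Exclusion of the 2-colouring with matrix [[0,5],[3,2]]\<close>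

lemma card_lt5_eq: "finite {i. i < (5::nat) \<and> Q i}" by simp

lemma no_S:
  assumes h0: "\<And>v. v \<in> Q5V \<Longrightarrow> P v \<Longrightarrow> card {i. i < 5 \<and> P (flip i v)} = 0"
    and h3: "\<And>v. v \<in> Q5V \<Longrightarrow> \<not> P v \<Longrightarrow> card {i. i < 5 \<and> P (flip i v)} = 3"
    and v: "v \<in> Q5V" and pv: "P v"
  shows False
proof -
  have n1: "\<And>i. i < 5 \<Longrightarrow> \<not> P (flip i v)"
    using h0[OF v pv] by (simp add: card_eq_0_iff)
  define u where "u = flip 0 v"
  have u: "u \<in> Q5V" unfolding u_def by (rule flip_V[OF v])
  have nu: "\<not> P u" unfolding u_def using n1 by simp
  define Q where "Q = {i. i < 5 \<and> P (flip i u)}"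
  have cQ: "card Q = 3" unfolding Q_def using h3[OF u nu] .
  have Q5: "Q \<subseteq> {..<5}" unfolding Q_def by auto
  have "\<exists>b. 0 < b \<and> b < 5 \<and> b \<notin> Q"
  proof (rule ccontr)
    assume "\<not> ?thesis"
    moreover have "0 \<in> Q" unfolding Q_def u_def using pv flip_flip by simp
    ultimately have "{..<5} \<subseteq> Q" by auto
    then have "card {..<5::nat} \<le> card Q" using Q5 by (intro card_mono) (auto intro: finite_subset)
    then show False using cQ by simp
  qed
  then obtain b where b0: "0 < b" and b5: "b < 5" and bQ: "b \<notin> Q" by blast
  define w where "w = flip b u"
  have w: "w \<in> Q5V" unfolding w_def by (rule flip_V[OF u])
  have nw: "\<not> P w" using bQ b5 unfolding w_def Q_def by simp
  have c3: "card {i. i < 5 \<and> P (flip i w)} = 3" using h3[OF w nw] .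
  have sub: "{i. i < 5 \<and> P (flip i w)} \<subseteq> {..<5} - {0, b}"
  proof -
    have "\<not> P (flip b w)" unfolding w_def using flip_flip nu by simp
    moreover have "\<not> P (flip 0 w)"
      unfolding w_def u_def using n1[OF b5] flip_comm flip_flip by metis
    ultimately show ?thesis by auto
  qed
  have c3': "card ({..<5::nat} - {0, b}) = 3" using b0 b5 by (simp add: card_Diff_subset)
  have eq: "{i. i < 5 \<and> P (flip i w)} = {..<5} - {0, b}"
    by (rule card_subset_eq) (use sub c3 c3' in auto)
  have "\<And>i. i < 5 \<Longrightarrow> i \<noteq> 0 \<Longrightarrow> i \<noteq> b \<Longrightarrow> \<not> P (flip i u)"
  proof -
    fix i assume i: "i < 5" "i \<noteq> 0" "i \<noteq> b"
    then have pi: "P (flip i w)" using eq by auto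
    have fi: "flip i w \<in> Q5V" by (rule flip_V[OF w])
    have "card {k. k < 5 \<and> P (flip k (flip i w))} = 0" by (rule h0[OF fi pi])
    then have "\<not> P (flip b (flip i w))" using b5 by (simp add: card_eq_0_iff)
    moreover have "flip b (flip i w) = flip i u" unfolding w_def using flip_comm flip_flip by metis
    ultimately show "\<not> P (flip i u)" by simp
  qed
  then have "Q \<subseteq> {0}" using bQ unfolding Q_def by auto
  then have "card Q \<le> card {0::nat}" by (intro card_mono) auto
  then have "card Q \<le> 1" by simp
  then show False using cQ by simp
qed

lemma nbr_colour: assumes P: "perfect_with_matrix m c A" and v: "v \<in> Q5V" and j: "j < m"
  shows "card {i. i < 5 \<and> c (flip i v) = j} = A (c v) j"
proof -
  have "\<forall>i<m. \<forall>j<m. \<forall>v\<in>Q5V. c v = i \<longrightarrow> card {w\<in>Q5V. Q5adj v w \<and> c w = j} = A i j"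
    using P unfolding perfect_with_matrix_def by blast
  then have "card {w\<in>Q5V. Q5adj v w \<and> c w = j} = A (c v) j"
    using v j perfect_range[OF P v] by simp
  then show ?thesis using nbr_card[OF v] by simp
qed

lemma excl_col: assumes P: "perfect_with_matrix 2 c A" and a: "a < 2"
  and h0: "A a a = 0" and h3: "A (1 - a) a = 3"
  shows False
proof -
  obtain v where v: "v \<in> Q5V" "c v = a" using perfect_surj[OF P a] by blast
  show False
  proof (rule no_S[of "\<lambda>w. c w = a", OF _ _ v])
    fix w assume w: "w \<in> Q5V" "c w = a"
    show "card {i. i < 5 \<and> c (flip i w) = a} = 0" using nbr_colour[OF P w(1) a] w(2) h0 by simp
  next
    fix w assume w: "w \<in> Q5V" "c w \<noteq> a"
    then have "c w = 1 - a" using perfect_range[OF P w(1)] a by auto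
    then show "card {i. i < 5 \<and> c (flip i w) = a} = 3" using nbr_colour[OF P w(1) a] h3 by simp
  qed
qed

definition good :: "nat list list \<Rightarrow> nat list list list \<Rightarrow> nat list list \<Rightarrow> bool" where
  "good Ps L B = list_ex (\<lambda>s. list_ex (\<lambda>B'. list_all (\<lambda>i. list_all (\<lambda>j. B!(s!i)!(s!j) = B'!i!j) [0..<length B]) [0..<length B]) L) Ps"

definition perm_ok :: "nat \<Rightarrow> nat list \<Rightarrow> bool" where
  "perm_ok m s = (distinct s \<and> length s = m \<and> set s = set [0..<m])"

lemma good_sound:
  assumes g: "good Ps L (Bm m A)" and ps: "\<forall>s\<in>set Ps. perm_ok m s"
  shows "\<exists>\<sigma>. \<sigma> permutes {..<m} \<and> (\<exists>B\<in>set L. \<forall>i<m. \<forall>j<m. A (\<sigma> i) (\<sigma> j) = mat B i j)"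
proof -
  obtain s B' where s: "s \<in> set Ps" and B': "B' \<in> set L"
    and e: "\<forall>i<m. \<forall>j<m. Bm m A ! (s!i) ! (s!j) = B'!i!j"
    using g unfolding good_def list_ex_iff list_all_iff by auto
  have ds: "distinct s" "length s = m" "set s = {..<m}"
    using ps s unfolding perm_ok_def by (auto simp: atLeast_upt)
  define \<sigma> where "\<sigma> = (\<lambda>i. if i < m then s!i else i)"
  have sl: "i < m \<Longrightarrow> s!i < m" for i using ds by (metis lessThan_iff nth_mem)
  have "bij_betw ((!) s) {..<m} {..<m}" using bij_betw_nth[OF ds(1)] ds by simp
  then have "bij_betw \<sigma> {..<m} {..<m}" by (rule bij_betw_cong[THEN iffD1, rotated]) (simp add: \<sigma>_def)
  then have perm: "\<sigma> permutes {..<m}" by (rule bij_imp_permutes) (simp add: \<sigma>_def)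
  have "\<forall>i<m. \<forall>j<m. A (\<sigma> i) (\<sigma> j) = mat B' i j"
    using e sl by (simp add: \<sigma>_def mat_def Bm_nth)
  then show ?thesis using perm B' by blast
qed

fun allc :: "nat list list \<Rightarrow> nat list list list \<Rightarrow> nat list list list \<Rightarrow> nat list list list \<Rightarrow> bool" where
  "allc Ps L E [] = True"
| "allc Ps L E (B#Bs) = ((if chk B then good Ps L B \<or> B \<in> set E else True) \<and> allc Ps L E Bs)"

lemma allc_sound: "allc Ps L E Bs \<Longrightarrow> B \<in> set Bs \<Longrightarrow> chk B \<Longrightarrow> good Ps L B \<or> B \<in> set E"
  by (induction Bs) (auto split: if_splits)

fun loop2 :: "nat list list \<Rightarrow> nat list list list \<Rightarrow> nat list list \<Rightarrow> nat list \<Rightarrow> nat list \<Rightarrow> nat list list \<Rightarrow> bool" where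
  "loop2 Ps L R r0 r1 [] = True"
| "loop2 Ps L R r0 r1 (r2#rs) = ((if (r0!2 = 0) = (r2!0 = 0) \<and> (r1!2 = 0) = (r2!1 = 0)
      then (if chk [r0,r1,r2] then good Ps L [r0,r1,r2] else True) else True) \<and> loop2 Ps L R r0 r1 rs)"

fun loop1 :: "nat list list \<Rightarrow> nat list list list \<Rightarrow> nat list list \<Rightarrow> nat list \<Rightarrow> nat list list \<Rightarrow> bool" where
  "loop1 Ps L R r0 [] = True"
| "loop1 Ps L R r0 (r1#rs) = ((if (r0!1 = 0) = (r1!0 = 0) then loop2 Ps L R r0 r1 R else True) \<and> loop1 Ps L R r0 rs)"

fun loop0 :: "nat list list \<Rightarrow> nat list list list \<Rightarrow> nat list list \<Rightarrow> nat list list \<Rightarrow> bool" where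
  "loop0 Ps L R [] = True"
| "loop0 Ps L R (r0#rs) = (loop1 Ps L R r0 R \<and> loop0 Ps L R rs)"

lemma loop2_sound: "loop2 Ps L R r0 r1 rs \<Longrightarrow> r2 \<in> set rs \<Longrightarrow> (r0!2 = 0) = (r2!0 = 0) \<Longrightarrow> (r1!2 = 0) = (r2!1 = 0)
   \<Longrightarrow> chk [r0,r1,r2] \<Longrightarrow> good Ps L [r0,r1,r2]"
  by (induction rs) (auto split: if_splits)

lemma loop1_sound: "loop1 Ps L R r0 rs \<Longrightarrow> r1 \<in> set rs \<Longrightarrow> (r0!1 = 0) = (r1!0 = 0) \<Longrightarrow> loop2 Ps L R r0 r1 R"
  by (induction rs) (auto split: if_splits)

lemma loop0_sound: "loop0 Ps L R rs \<Longrightarrow> r0 \<in> set rs \<Longrightarrow> loop1 Ps L R r0 R"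
  by (induction rs) auto

definition "R2 = ([[0,5],[1,4],[2,3],[3,2],[4,1],[5,0]]::nat list list)"
definition "R3 = ([[0,0,5],[0,1,4],[0,2,3],[0,3,2],[0,4,1],[0,5,0],[1,0,4],[1,1,3],[1,2,2],[1,3,1],[1,4,0],[2,0,3],[2,1,2],[2,2,1],[2,3,0],[3,0,2],[3,1,1],[3,2,0],[4,0,1],[4,1,0],[5,0,0]]::nat list list)"
definition "C2 = ([[[0,5],[0,5]],[[0,5],[1,4]],[[0,5],[2,3]],[[0,5],[3,2]],[[0,5],[4,1]],[[0,5],[5,0]],[[1,4],[0,5]],[[1,4],[1,4]],[[1,4],[2,3]],[[1,4],[3,2]],[[1,4],[4,1]],[[1,4],[5,0]],[[2,3],[0,5]],[[2,3],[1,4]],[[2,3],[2,3]],[[2,3],[3,2]],[[2,3],[4,1]],[[2,3],[5,0]],[[3,2],[0,5]],[[3,2],[1,4]],[[3,2],[2,3]],[[3,2],[3,2]],[[3,2],[4,1]],[[3,2],[5,0]],[[4,1],[0,5]],[[4,1],[1,4]],[[4,1],[2,3]],[[4,1],[3,2]],[[4,1],[4,1]],[[4,1],[5,0]],[[5,0],[0,5]],[[5,0],[1,4]],[[5,0],[2,3]],[[5,0],[3,2]],[[5,0],[4,1]],[[5,0],[5,0]]]::nat list list list)"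
definition "P2 = [[0,1],[1,0::nat]]"
definition "P3 = [[0,1,2],[0,2,1],[1,0,2],[1,2,0],[2,0,1],[2,1,0::nat]]"
definition "L2 = [[[0,5],[5,0]], [[1,4],[4,1]], [[2,3],[1,4]],
            [[2,3],[3,2]], [[3,2],[2,3]], [[4,1],[1,4::nat]]]"
definition "L3 = [[[0,1,4],[1,0,4],[2,2,1]], [[0,3,2],[3,0,2],[1,1,3]],
            [[0,5,0],[1,0,4],[0,2,3]], [[1,0,4],[0,1,4],[1,3,1]],
            [[1,0,4],[0,1,4],[2,2,1]], [[1,2,2],[2,1,2],[1,1,3]],
            [[2,1,2],[1,2,2],[1,1,3]], [[3,0,2],[0,3,2],[1,1,3::nat]]]"
definition "E2 = [[[0,5],[3,2]], [[2,3],[5,0::nat]]]"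

lemma comp2: "allc P2 L2 E2 C2"
  by code_simp

lemma comp3: "loop0 P3 L3 R3 R3"
  by code_simp

lemma perms2: "\<forall>s\<in>set P2. perm_ok 2 s"
  by code_simp

lemma perms3: "\<forall>s\<in>set P3. perm_ok 3 s"
  by code_simp

definition "ZT2 = ([([[0,5],[5,0]], [0,1,1,0,1,0,0,1,1,0,0,1,0,1,1,0,1,0,0,1,0,1,1,0,0,1,1,0,1,0,0,1]), ([[1,4],[4,1]], [0,0,1,1,1,1,0,0,1,1,0,0,0,0,1,1,1,1,0,0,0,0,1,1,0,0,1,1,1,1,0,0]), ([[2,3],[1,4]], [0,0,0,0,1,1,1,1,1,1,1,1,1,1,1,1,1,1,1,1,1,1,1,1,1,1,1,1,0,0,0,0]), ([[2,3],[3,2]], [0,0,0,0,1,1,1,1,1,1,1,1,0,0,0,0,1,1,1,1,0,0,0,0,0,0,0,0,1,1,1,1]), ([[3,2],[2,3]], [0,0,0,0,0,0,0,0,1,1,1,1,1,1,1,1,1,1,1,1,1,1,1,1,0,0,0,0,0,0,0,0]), ([[4,1],[1,4]], [0,0,0,0,0,0,0,0,0,0,0,0,0,0,0,0,1,1,1,1,1,1,1,1,1,1,1,1,1,1,1,1])] :: (nat list list \<times> nat list) list)"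
definition "ZT3 = ([([[0,1,4],[1,0,4],[2,2,1]], [0,1,2,2,2,2,0,1,2,2,1,0,1,0,2,2,2,2,1,0,1,0,2,2,0,1,2,2,2,2,0,1]), ([[0,3,2],[3,0,2],[1,1,3]], [0,1,1,0,1,0,0,1,2,2,2,2,2,2,2,2,2,2,2,2,2,2,2,2,1,0,0,1,0,1,1,0]), ([[0,5,0],[1,0,4],[0,2,3]], [0,1,1,2,1,2,2,2,1,2,2,2,2,2,2,1,1,2,2,2,2,2,2,1,2,2,2,1,2,1,1,0]), ([[1,0,4],[0,1,4],[1,3,1]], [0,0,2,2,2,2,1,1,2,2,1,1,1,1,2,2,2,2,1,1,1,1,2,2,1,1,2,2,2,2,0,0]), ([[1,0,4],[0,1,4],[2,2,1]], [0,0,2,2,2,2,0,0,2,2,1,1,1,1,2,2,2,2,1,1,1,1,2,2,0,0,2,2,2,2,0,0]), ([[1,2,2],[2,1,2],[1,1,3]], [0,0,1,1,1,1,0,0,2,2,2,2,2,2,2,2,2,2,2,2,2,2,2,2,1,1,0,0,0,0,1,1]), ([[2,1,2],[1,2,2],[1,1,3]], [0,0,0,0,1,1,1,1,2,2,2,2,2,2,2,2,2,2,2,2,2,2,2,2,1,1,1,1,0,0,0,0]), ([[3,0,2],[0,3,2],[1,1,3]], [0,0,0,0,0,0,0,0,2,2,2,2,2,2,2,2,2,2,2,2,2,2,2,2,1,1,1,1,1,1,1,1])] :: (nat list list \<times> nat list) list)"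

definition bin :: "bool list \<Rightarrow> nat" where
  "bin v = foldr (\<lambda>b n. (if b then 1 else 0) + 2 * n) v 0"
definition colr :: "nat list \<Rightarrow> bool list \<Rightarrow> nat" where
  "colr tbl v = tbl ! bin v"
definition allV :: "bool list list" where "allV = List.n_lists 5 [False, True]"
definition nbs :: "bool list \<Rightarrow> bool list list" where
  "nbs v = [flip 0 v, flip 1 v, flip 2 v, flip 3 v, flip 4 v]"
definition cnt :: "nat list \<Rightarrow> nat \<Rightarrow> nat" where
  "cnt zs j = length (filter (\<lambda>x. x = j) zs)"

fun pchk :: "nat list \<Rightarrow> nat list list \<Rightarrow> bool list list \<Rightarrow> bool" where
  "pchk tbl B [] = True"
| "pchk tbl B (v#vs) = (map (cnt (map (colr tbl) (nbs v))) [0..<length B] = B ! (colr tbl v) \<and> pchk tbl B vs)"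

definition exok :: "nat \<Rightarrow> nat list list \<times> nat list \<Rightarrow> bool" where
  "exok m Bt = (case Bt of (B, tbl) \<Rightarrow> length B = m \<and> list_all (\<lambda>r. length r = m) B \<and>
      set (map (colr tbl) allV) = set [0..<m] \<and> pchk tbl B allV)"

lemma ex2: "list_all (exok 2) ZT2" by code_simp
lemma ex3: "list_all (exok 3) ZT3" by code_simp
lemma zt2: "map fst ZT2 = L2" by (simp add: ZT2_def L2_def)
lemma zt3: "map fst ZT3 = L3" by (simp add: ZT3_def L3_def)

lemma Q5V_allV: "Q5V = set allV" unfolding allV_def by (rule Q5V_list)

lemma upt5: "[0..<5] = [0,1,2,3,4::nat]" by (simp add: upt_rec)

lemma nbs_map: "nbs v = map (\<lambda>k. flip k v) [0..<5]"
  by (simp add: nbs_def upt5)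

lemma cnt_card: "cnt (map f (nbs v)) j = card {k. k < 5 \<and> f (flip k v) = j}"
proof -
  have "cnt (map f (nbs v)) j = length (filter (\<lambda>k. f (flip k v) = j) [0..<5])"
    by (simp add: cnt_def nbs_map filter_map o_def)
  also have "\<dots> = card {k. k < 5 \<and> f (flip k v) = j}"
    unfolding length_filter_conv_card by (intro arg_cong[where f=card]) auto
  finally show ?thesis .
qed

lemma pchk_sound: "pchk tbl B vs \<Longrightarrow> v \<in> set vs \<Longrightarrow>
   map (cnt (map (colr tbl) (nbs v))) [0..<length B] = B ! (colr tbl v)"
  by (induction vs) auto

lemma exok_sound: assumes "exok m (B, tbl)" shows "perfect_with_matrix m (colr tbl) (mat B)"
proof -
  have lB: "length B = m" and col: "set (map (colr tbl) allV) = set [0..<m]"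
    and pc: "pchk tbl B allV"
    using assms unfolding exok_def by auto
  have "colouring m (colr tbl)" unfolding colouring_def Q5V_allV
    using col by (simp add: atLeast_upt)
  moreover have "card {w\<in>Q5V. Q5adj v w \<and> colr tbl w = j} = mat B i j"
    if i: "i < m" and j: "j < m" and v: "v \<in> Q5V" and cv: "colr tbl v = i" for i j v
  proof -
    have "card {w\<in>Q5V. Q5adj v w \<and> colr tbl w = j} = card {k. k < 5 \<and> colr tbl (flip k v) = j}"
      by (rule nbr_card[OF v])
    also have "\<dots> = cnt (map (colr tbl) (nbs v)) j" by (simp add: cnt_card)
    also have "\<dots> = map (cnt (map (colr tbl) (nbs v))) [0..<length B] ! j" using j lB by simp
    also have "\<dots> = B ! (colr tbl v) ! j" using pchk_sound[OF pc] v Q5V_allV by simp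
    finally show ?thesis using cv by (simp add: mat_def)
  qed
  ultimately show ?thesis unfolding perfect_with_matrix_def by blast
qed

lemma exist_from: assumes "list_all (exok m) Z" "B \<in> set (map fst Z)"
  shows "\<exists>c. perfect_with_matrix m c (mat B)"
proof -
  obtain tbl where "(B, tbl) \<in> set Z" using assms(2) by auto
  then have "exok m (B, tbl)" using assms(1) by (simp add: list_all_iff)
  then show ?thesis using exok_sound by blast
qed

lemma R2_eq: "set R2 = set (filter (\<lambda>r. sum_list r = 5) (List.n_lists 2 [0..<6]))" by code_simp
lemma R3_eq: "set R3 = set (filter (\<lambda>r. sum_list r = 5) (List.n_lists 3 [0..<6]))" by code_simp
lemma C2_eq: "set C2 = set (List.n_lists 2 R2)" by code_simp

lemma row2: "a + b = (5::nat) \<Longrightarrow> [a, b] \<in> set R2"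
  unfolding R2_eq set_filter set_n_lists by auto

lemma row3: "a + b + c = (5::nat) \<Longrightarrow> [a, b, c] \<in> set R3"
  unfolding R3_eq set_filter set_n_lists by auto

lemma Bm2: "Bm 2 A = [[A 0 0, A 0 1], [A 1 0, A 1 1]]"
  by (simp add: Bm_def upt_rec)

lemma Bm3: "Bm 3 A = [[A 0 0, A 0 1, A 0 2], [A 1 0, A 1 1, A 1 2], [A 2 0, A 2 1, A 2 2]]"
  by (simp add: Bm_def upt_rec numeral_2_eq_2)

lemma sum2: "(\<Sum>j<(2::nat). f j) = f 0 + (f 1 :: nat)" by (simp add: eval_nat_numeral)
lemma sum3: "(\<Sum>j<(3::nat). f j) = f 0 + f 1 + (f 2 :: nat)" by (simp add: eval_nat_numeral)

lemma zero_sym: assumes P: "perfect_with_matrix m c A" and i: "i < m" and j: "j < m"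
  shows "(A i j = 0) = (A j i = 0)"
  using double_count[OF P i j] class_nonempty[OF P i] class_nonempty[OF P j] by auto

lemma part2: "perfect_with_matrix 2 c A \<Longrightarrow>
   \<exists>\<sigma>. \<sigma> permutes {..<2} \<and> (\<exists>B\<in>set L2. \<forall>i<2. \<forall>j<2. A (\<sigma> i) (\<sigma> j) = mat B i j)"
proof -
  assume P: "perfect_with_matrix 2 c A"
  have r0: "A 0 0 + A 0 1 = 5" using row_sum[OF P, of 0] by (simp add: sum2)
  have r1: "A 1 0 + A 1 1 = 5" using row_sum[OF P, of 1] by (simp add: sum2)
  have mem: "Bm 2 A \<in> set C2"
    unfolding Bm2 C2_eq set_n_lists using row2[OF r0] row2[OF r1] by auto
  have "good P2 L2 (Bm 2 A) \<or> Bm 2 A \<in> set E2"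
    by (rule allc_sound[OF comp2 mem chk_sound[OF P]])
  moreover have "Bm 2 A \<notin> set E2"
  proof
    assume "Bm 2 A \<in> set E2"
    then have "(A 0 0 = 0 \<and> A 1 0 = 3) \<or> (A 1 1 = 0 \<and> A 0 1 = 3)"
      unfolding Bm2 E2_def by auto
    then show False
    proof
      assume "A 0 0 = 0 \<and> A 1 0 = 3"
      then show False using excl_col[OF P, of 0] by simp
    next
      assume "A 1 1 = 0 \<and> A 0 1 = 3"
      then show False using excl_col[OF P, of 1] by simp
    qed
  qed
  ultimately have "good P2 L2 (Bm 2 A)" by simp
  then show ?thesis using good_sound perms2 by blast
qed

lemma part3: "perfect_with_matrix 3 c A \<Longrightarrow>
   \<exists>\<sigma>. \<sigma> permutes {..<3} \<and> (\<exists>B\<in>set L3. \<forall>i<3. \<forall>j<3. A (\<sigma> i) (\<sigma> j) = mat B i j)"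
proof -
  assume P: "perfect_with_matrix 3 c A"
  have r0: "[A 0 0, A 0 1, A 0 2] \<in> set R3" using row_sum[OF P, of 0] by (intro row3) (simp add: sum3)
  have r1: "[A 1 0, A 1 1, A 1 2] \<in> set R3" using row_sum[OF P, of 1] by (intro row3) (simp add: sum3)
  have r2: "[A 2 0, A 2 1, A 2 2] \<in> set R3" using row_sum[OF P, of 2] by (intro row3) (simp add: sum3)
  have z01: "(A 0 1 = 0) = (A 1 0 = 0)" by (rule zero_sym[OF P]) auto
  have z02: "(A 0 2 = 0) = (A 2 0 = 0)" by (rule zero_sym[OF P]) auto
  have z12: "(A 1 2 = 0) = (A 2 1 = 0)" by (rule zero_sym[OF P]) auto
  have l1: "loop1 P3 L3 R3 [A 0 0, A 0 1, A 0 2] R3" by (rule loop0_sound[OF comp3 r0])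
  have l2: "loop2 P3 L3 R3 [A 0 0, A 0 1, A 0 2] [A 1 0, A 1 1, A 1 2] R3"
    by (rule loop1_sound[OF l1 r1]) (use z01 in simp)
  have "good P3 L3 (Bm 3 A)"
    unfolding Bm3 by (rule loop2_sound[OF l2 r2]) (use z02 z12 chk_sound[OF P] in \<open>simp_all add: Bm3\<close>)
  then show ?thesis using good_sound perms3 by blast
qed

theorem theorem6p1:
  shows "classified_by 2
           [[[0,5],[5,0]], [[1,4],[4,1]], [[2,3],[1,4]],
            [[2,3],[3,2]], [[3,2],[2,3]], [[4,1],[1,4]]]
       \<and> classified_by 3
           [[[0,1,4],[1,0,4],[2,2,1]], [[0,3,2],[3,0,2],[1,1,3]],
            [[0,5,0],[1,0,4],[0,2,3]], [[1,0,4],[0,1,4],[1,3,1]],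
            [[1,0,4],[0,1,4],[2,2,1]], [[1,2,2],[2,1,2],[1,1,3]],
            [[2,1,2],[1,2,2],[1,1,3]], [[3,0,2],[0,3,2],[1,1,3]]]"
proof -
  have "classified_by 2 L2"
    unfolding classified_by_def
    using part2 exist_from[OF ex2] zt2 by auto
  moreover have "classified_by 3 L3"
    unfolding classified_by_def
    using part3 exist_from[OF ex3] zt3 by auto
  ultimately show ?thesis unfolding L2_def L3_def by simp
qed

end
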